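(* Let $c\in\mathbb{C}$, $r\ge0$, and suppose that the interior of $\overline{B}(c,r)=\{c'\in\mathbb{C}:|c'-c|\le r\}$ contains a superattracting parameter $\tilde c$. If $L=\overline{\bigcup_{g\in G_{c,r}}\{g(0)\}}$ is bounded in $\mathbb{C}$, then $L$ is a planar minimal set of $G_{c,r}$.
   Context: $f_c(z)=z^2+c$, extended to $\widehat{\mathbb{C}}$ by $f_c(\infty)=\infty$. A parameter $\tilde c$ is superattracting if $f_{\tilde c}^{\circ p}(0)=0$ for some $p\in\mathbb{N}$. $G_{c,r}$ is the semigroup under composition generated by $\{f_{c'}:c'\in\overline{B}(c,r)\}$. A minimal set of $G_{c,r}$ is a minimal element, with respect to inclusion, of the family of non-empty compact $L\subset\widehat{\mathbb{C}}$ with $g(L)\subset L$ for all $g\in G_{c,r}$; it is planar if $\infty\notin L$. *)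

theory Defs
  imports "HOL-Analysis.Analysis"
begin

text \<open>The quadratic family f_c(z) = z^2 + c (on the finite plane; f_c(infinity) = infinity
  plays no role for planar sets).\<close>
definition fc :: "complex \<Rightarrow> complex \<Rightarrow> complex" where
  "fc c z = z\<^sup>2 + c"

definition superattracting :: "complex \<Rightarrow> bool" where
  "superattracting c \<longleftrightarrow> (\<exists>p::nat. p \<ge> 1 \<and> (fc c ^^ p) 0 = 0)"

inductive_set gen_semigroup :: "('a \<Rightarrow> 'a) set \<Rightarrow> ('a \<Rightarrow> 'a) set" for F where
  base: "f \<in> F \<Longrightarrow> f \<in> gen_semigroup F"
| comp: "f \<in> gen_semigroup F \<Longrightarrow> g \<in> gen_semigroup F \<Longrightarrow> f \<circ> g \<in> gen_semigroup F"

definition G :: "complex \<Rightarrow> real \<Rightarrow> (complex \<Rightarrow> complex) set" where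
  "G c r = gen_semigroup (fc ` cball c r)"

definition forward_invariant :: "('a \<Rightarrow> 'a) set \<Rightarrow> 'a set \<Rightarrow> bool" where
  "forward_invariant S K \<longleftrightarrow> (\<forall>g\<in>S. g ` K \<subseteq> K)"

text \<open>Any candidate K \<subseteq> L also avoids infinity,
  and compactness in the sphere of a subset of C is compactness in C.\<close>
definition planar_minimal_set :: "(complex \<Rightarrow> complex) set \<Rightarrow> complex set \<Rightarrow> bool" where
  "planar_minimal_set S L \<longleftrightarrow>
     L \<noteq> {} \<and> compact L \<and> forward_invariant S L \<and>
     (\<forall>K. K \<noteq> {} \<and> compact K \<and> forward_invariant S K \<and> K \<subseteq> L \<longrightarrow> K = L)"

end

theory Submission
  imports Defs "HOL-Complex_Analysis.Complex_Analysis"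
begin

fun orb :: "complex list \<Rightarrow> complex \<Rightarrow> complex" where
  "orb [] z = z" | "orb (t#ts) z = fc t (orb ts z)"

lemma orb_append: "orb (xs @ ys) z = orb xs (orb ys z)"
  by (induction xs) auto

lemma orb_replicate: "orb (replicate m t) z = (fc t ^^ m) z"
  by (induction m) auto

lemma G_orb: "g \<in> G c r \<Longrightarrow> \<exists>cs. cs \<noteq> [] \<and> set cs \<subseteq> cball c r \<and> g = orb cs"
  unfolding G_def
proof (induction rule: gen_semigroup.induct)
  case (base f)
  then obtain t where "t \<in> cball c r" "f = fc t" by auto
  then show ?case by (intro exI[of _ "[t]"]) (auto simp: fun_eq_iff)
next
  case (comp f g)
  then obtain cs ds where "cs \<noteq> []" "set cs \<subseteq> cball c r" "f = orb cs"
     "ds \<noteq> []" "set ds \<subseteq> cball c r" "g = orb ds" by blast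
  then show ?case by (intro exI[of _ "cs @ ds"]) (auto simp: fun_eq_iff orb_append)
qed

lemma orb_G: "cs \<noteq> [] \<Longrightarrow> set cs \<subseteq> cball c r \<Longrightarrow> orb cs \<in> G c r"
proof (induction cs)
  case Nil then show ?case by simp
next
  case (Cons t ts)
  have ft: "fc t \<in> G c r" using Cons.prems unfolding G_def by (auto intro: gen_semigroup.base)
  show ?case
  proof (cases "ts = []")
    case True
    then have "orb (t#ts) = fc t" by (auto simp: fun_eq_iff)
    then show ?thesis using ft by simp
  next
    case False
    then have "orb ts \<in> G c r" using Cons by auto
    then have "fc t \<circ> orb ts \<in> G c r" using ft unfolding G_def by (simp add: gen_semigroup.comp)
    moreover have "orb (t#ts) = fc t \<circ> orb ts" by (auto simp: fun_eq_iff)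
    ultimately show ?thesis by metis
  qed
qed

lemma orb_cont: "continuous_on UNIV (orb cs)"
proof (induction cs)
  case Nil then show ?case by (simp add: continuous_on_id')
next
  case (Cons t ts)
  have "orb (t#ts) = (\<lambda>z. (orb ts z)^2 + t)" by (auto simp: fun_eq_iff fc_def)
  then show ?case using Cons by (auto intro!: continuous_intros)
qed

lemma G_cont: "g \<in> G c r \<Longrightarrow> continuous_on UNIV g"
  using G_orb orb_cont by blast

lemma orb_holo: "(\<lambda>w. orb (map (\<lambda>t. ct + w * (t - ct)) cs) z) holomorphic_on UNIV"
proof (induction cs)
  case Nil then show ?case by simp
next
  case (Cons t ts)
  then show ?case by (simp add: fc_def) (intro holomorphic_intros)
qed

lemma funpow_holo: "f holomorphic_on S \<Longrightarrow> (\<lambda>w. (fc t ^^ m) (f w)) holomorphic_on S"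
proof (induction m)
  case 0 then show ?case by simp
next
  case (Suc m)
  then show ?case by (simp add: fc_def) (intro holomorphic_intros)
qed

lemma contraction:
  assumes "p \<ge> 1" "(fc ct ^^ p) 0 = 0"
  shows "\<exists>\<delta>>0. \<forall>w. norm w < \<delta> \<longrightarrow> norm ((fc ct ^^ p) w) \<le> norm w / 2"
proof -
  define H where "H u = (fc ct ^^ (p-1)) (u + ct)" for u
  have FH: "(fc ct ^^ p) w = H (w^2)" for w
  proof -
    have "p = Suc (p-1)" using assms by simp
    then have "(fc ct ^^ p) w = (fc ct ^^ (p-1)) (fc ct w)" by (metis comp_apply funpow_Suc_right)
    then show ?thesis by (simp add: H_def fc_def)
  qed
  have H0: "H 0 = 0" using FH[of 0] assms by simp
  have "(\<lambda>u. u + ct) holomorphic_on UNIV" by (intro holomorphic_intros)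
  then have "H holomorphic_on UNIV" unfolding H_def
    using funpow_holo[where f="\<lambda>u. u + ct" and S=UNIV and t=ct and m="p-1"] by blast
  then have "H field_differentiable at 0" by (simp add: holomorphic_on_def field_differentiable_at_within)
  then obtain d where "(H has_field_derivative d) (at 0)" by (auto simp: field_differentiable_def)
  then have "((\<lambda>y. H y / y) \<longlongrightarrow> d) (at 0)" using H0 by (simp add: has_field_derivative_iff)
  then have "\<forall>\<^sub>F y in at 0. dist (H y / y) d < 1" by (simp add: tendsto_iff)
  then obtain \<eta> where eta: "\<eta> > 0" "\<And>y. y \<noteq> 0 \<Longrightarrow> dist y 0 < \<eta> \<Longrightarrow> dist (H y / y) d < 1"
    by (auto simp: eventually_at)
  define A where "A = norm d + 1"
  have A: "A > 0" using norm_ge_zero[of d] unfolding A_def by linarith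
  have HA: "norm (H y) \<le> A * norm y" if "norm y < \<eta>" for y
  proof (cases "y = 0")
    case True then show ?thesis using H0 by simp
  next
    case False
    then have "dist (H y / y) d < 1" using eta that by simp
    then have "norm (H y / y) \<le> A" unfolding A_def dist_norm
      by (metis add.commute diff_add_cancel le_less_trans norm_triangle_ineq less_eq_real_def add_le_cancel_left)
    then show ?thesis using False by (simp add: norm_divide divide_le_eq mult.commute)
  qed
  define \<delta> where "\<delta> = min (min 1 \<eta>) (1 / (2*A))"
  have "\<delta> > 0" using eta A by (simp add: \<delta>_def)
  moreover have "norm ((fc ct ^^ p) w) \<le> norm w / 2" if "norm w < \<delta>" for w
  proof -
    have w1: "norm w < 1" "norm w < \<eta>" "norm w < 1/(2*A)" using that by (auto simp: \<delta>_def)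
    have "norm (w^2) = norm w * norm w" by (metis norm_power power2_eq_square)
    also have "\<dots> \<le> norm w" using w1(1) by (intro mult_left_le_one_le) auto
    finally have "norm (w^2) \<le> norm w" .
    then have "norm (w^2) < \<eta>" using w1 by simp
    then have "norm ((fc ct ^^ p) w) \<le> A * norm (w^2)" using HA FH by simp
    also have "\<dots> = (A * norm w) * norm w" by (metis norm_power power2_eq_square mult.assoc)
    also have "\<dots> \<le> (1/2) * norm w"
      using w1(3) A by (intro mult_right_mono) (auto simp: field_simps)
    finally show ?thesis by simp
  qed
  ultimately show ?thesis by blast
qed

lemma iterate_zero:
  fixes F :: "complex \<Rightarrow> complex" and w :: complex
  assumes d: "\<delta> > 0" "\<And>w. norm w < \<delta> \<Longrightarrow> norm (F w) \<le> norm w / 2" and w: "norm w < \<delta>"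
  shows "(\<lambda>k. (F ^^ k) w) \<longlonglongrightarrow> (0::complex)"
proof -
  have b: "norm ((F ^^ k) w) \<le> norm w / 2^k" for k
  proof (induction k)
    case 0 then show ?case by simp
  next
    case (Suc k)
    have "norm w / 2^k \<le> norm w / 1" by (intro divide_left_mono) auto
    then have "norm ((F ^^ k) w) < \<delta>" using Suc w by linarith
    then have "norm ((F ^^ Suc k) w) \<le> norm ((F ^^ k) w) / 2" using d by simp
    also have "\<dots> \<le> norm w / 2 ^ Suc k" using Suc by (simp add: field_simps)
    finally show ?case .
  qed
  show ?thesis
    by (rule Lim_null_comparison[OF _ LIMSEQ_divide_realpow_zero[of 2 "norm w"]]) (use b in auto)
qed

lemma seg_ball:
  assumes "dist c ct < r" "dist c t \<le> r" "0 \<le> a" "a < 1"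
  shows "dist c (ct + complex_of_real a * (t - ct)) < r"
proof -
  have "c - (ct + complex_of_real a * (t - ct)) = complex_of_real (1 - a) * (c - ct) + complex_of_real a * (c - t)"
    by (simp add: algebra_simps)
  then have "dist c (ct + complex_of_real a * (t - ct)) \<le> (1 - a) * dist c ct + a * dist c t"
    using assms by (metis (no_types, lifting) dist_norm norm_mult norm_of_real norm_triangle_ineq abs_of_nonneg diff_ge_0_iff_ge less_eq_real_def)
  also have "\<dots> < (1 - a) * r + a * r"
    using assms by (intro add_less_le_mono mult_strict_left_mono mult_left_mono) auto
  finally show ?thesis by (simp add: algebra_simps)
qed

lemma zero_in_K:
  assumes ct: "ct \<in> ball c r" and sa: "superattracting ct"
    and bL: "bounded (closure {g 0 | g. g \<in> G c r})"
    and K: "K \<noteq> {}" "compact K" "forward_invariant (G c r) K" "K \<subseteq> closure {g 0 | g. g \<in> G c r}"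
  shows "0 \<in> K"
proof -
  define L where "L = closure {g 0 | g. g \<in> G c r}"
  obtain p where p: "p \<ge> 1" "(fc ct ^^ p) 0 = 0" using sa superattracting_def by auto
  have ctc: "ct \<in> cball c r" using ct by auto
  have r: "r > 0" using ct by (metis dist_not_less_zero le_less_trans mem_ball not_le)
  have fcG: "fc t \<in> G c r" if "t \<in> cball c r" for t using that by (simp add: G_def gen_semigroup.base)
  have Kinv: "g x \<in> K" if "g \<in> G c r" "x \<in> K" for g x using K(3) that unfolding forward_invariant_def by auto
  have Kfun: "(fc ct ^^ m) x \<in> K" if "x \<in> K" for m x
    using that by (induction m) (auto intro: Kinv fcG ctc)
  have orbL: "orb ds 0 \<in> L" if "set ds \<subseteq> cball c r" for ds
  proof (cases "ds = []")
    case True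
    have "orb (replicate p ct) \<in> G c r" using p ctc by (intro orb_G) auto
    then have "orb (replicate p ct) 0 \<in> L" unfolding L_def by (intro closure_subset[THEN subsetD]) auto
    with True p show ?thesis by (simp add: orb_replicate)
  next
    case False then show ?thesis using orb_G[OF False that] unfolding L_def
      by (intro closure_subset[THEN subsetD]) auto
  qed
  obtain B where B: "\<forall>x\<in>L. norm x \<le> B" using bL unfolding L_def bounded_iff by auto
  obtain z where z: "z \<in> K" using K(1) by auto
  define U where "U = ball (z^2 + c) r"
  have UK: "U \<subseteq> K"
  proof
    fix y assume "y \<in> U"
    then have "y - z^2 \<in> cball c r" by (auto simp: U_def dist_norm algebra_simps)
    then have "fc (y - z^2) z \<in> K" using Kinv fcG z by auto
    then show "y \<in> K" by (simp add: fc_def)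
  qed
  have "z^2 + c \<in> U" using r by (simp add: U_def)
  then have "z^2 + c \<in> U \<inter> L" using UK K(4) unfolding L_def by blast
  then have "U \<inter> {g 0 | g. g \<in> G c r} \<noteq> {}"
    using open_Int_closure_eq_empty[of U "{g 0 | g. g \<in> G c r}"] open_ball unfolding L_def U_def by blast
  then obtain g where g: "g \<in> G c r" "g 0 \<in> U" by auto
  then obtain cs where cs: "cs \<noteq> []" "set cs \<subseteq> cball c r" "g = orb cs" using G_orb by blast
  define ell where "ell w = map (\<lambda>t. ct + w * (t - ct)) cs" for w
  define \<Phi> where "\<Phi> w = orb (ell w) 0" for w
  have \<Phi>holo: "\<Phi> holomorphic_on UNIV" using orb_holo[of ct cs 0] unfolding \<Phi>_def ell_def by simp
  have \<Phi>cont: "isCont \<Phi> x" for x using \<Phi>holo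
    by (metis continuous_on_eq_continuous_at holomorphic_on_imp_continuous_on open_UNIV UNIV_I)
  have "ell 1 = cs" unfolding ell_def by (induction cs) auto
  then have \<Phi>1: "\<Phi> 1 = g 0" by (simp add: \<Phi>_def cs)
  define \<Omega> where "\<Omega> = {w. \<forall>t\<in>set cs. ct + w * (t - ct) \<in> ball c r}"
  have "\<Omega> = (\<Inter>t\<in>set cs. (\<lambda>w. ct + w * (t - ct)) -` ball c r)" unfolding \<Omega>_def by auto
  moreover have "open ((\<lambda>w. ct + w * (t - ct)) -` ball c r)" for t
    by (intro continuous_open_vimage open_ball) (intro continuous_intros)
  ultimately have \<Omega>open: "open \<Omega>" by (simp add: open_INT)
  have \<Omega>conv: "convex \<Omega>"
    unfolding convex_def
  proof (intro ballI allI impI)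
    fix x y u v assume xy: "x \<in> \<Omega>" "y \<in> \<Omega>" and uv: "0 \<le> (u::real)" "0 \<le> v" "u + v = 1"
    show "u *\<^sub>R x + v *\<^sub>R y \<in> \<Omega>" unfolding \<Omega>_def mem_Collect_eq
    proof
      fix t assume t: "t \<in> set cs"
      have e: "ct + (u *\<^sub>R x + v *\<^sub>R y) * (t - ct) = u *\<^sub>R (ct + x * (t - ct)) + v *\<^sub>R (ct + y * (t - ct))"
      proof -
        have "complex_of_real u + complex_of_real v = 1" using uv(3) by (metis of_real_add of_real_1)
        then have "ct = complex_of_real u * ct + complex_of_real v * ct" by (metis distrib_right mult_1)
        then show ?thesis by (simp add: scaleR_conv_of_real algebra_simps)
      qed
      have "ct + x * (t - ct) \<in> ball c r" "ct + y * (t - ct) \<in> ball c r" using xy t unfolding \<Omega>_def by auto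
      then show "ct + (u *\<^sub>R x + v *\<^sub>R y) * (t - ct) \<in> ball c r" unfolding e
        by (rule convexD[OF convex_ball _ _ uv])
    qed
  qed
  have \<Omega>conn: "connected \<Omega>" using \<Omega>conv convex_connected by blast
  have ellball: "set (ell w) \<subseteq> cball c r" if "w \<in> \<Omega>" for w
    using that unfolding \<Omega>_def ell_def by auto
  have "0 \<in> \<Omega>" using ct unfolding \<Omega>_def by auto
  have "\<forall>\<^sub>F w in at 1. \<Phi> w \<in> U"
    using topological_tendstoD[of \<Phi> "\<Phi> 1" "at 1" U] \<Phi>cont[of 1] g(2) \<Phi>1
    by (simp add: U_def isCont_def)
  then obtain d where d: "d > 0" "\<And>w. w \<noteq> 1 \<Longrightarrow> dist w 1 < d \<Longrightarrow> \<Phi> w \<in> U"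
    by (auto simp: eventually_at)
  define a where "a = 1 - min d 1 / 2"
  define lam0 where "lam0 = complex_of_real a"
  have a: "0 \<le> a" "a < 1" using d by (auto simp: a_def)
  have "dist lam0 1 = min d 1 / 2"
  proof -
    have "dist lam0 1 = norm (complex_of_real (a - 1))" by (simp add: lam0_def dist_norm)
    also have "\<dots> = 1 - a" using a by (simp only: norm_of_real)
    finally show ?thesis by (simp add: a_def)
  qed
  then have "\<Phi> lam0 \<in> U" using d a by (intro d(2)) (auto simp: lam0_def)
  then have \<Phi>0K: "\<Phi> lam0 \<in> K" using UK by auto
  have lam0\<Omega>: "lam0 \<in> \<Omega>" unfolding \<Omega>_def lam0_def
    using seg_ball[of c ct r _ a] ct cs(2) a by auto
  define n where "n = length cs"
  define q where "q = p * n - n"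
  define \<theta> where "\<theta> w = (fc ct ^^ q) (\<Phi> w)" for w
  define \<psi> where "\<psi> k w = (fc ct ^^ (p * k)) (\<theta> w)" for k w
  have \<theta>holo: "\<theta> holomorphic_on UNIV" unfolding \<theta>_def using funpow_holo[OF \<Phi>holo] by blast
  have \<psi>holo: "\<psi> k holomorphic_on UNIV" for k unfolding \<psi>_def using funpow_holo[OF \<theta>holo] by blast
  have "ell 0 = replicate n ct" unfolding ell_def n_def by (induction cs) auto
  then have "\<theta> 0 = (fc ct ^^ (q + n)) 0" by (simp add: \<theta>_def \<Phi>_def orb_replicate funpow_add)
  also have "q + n = p * n" using p by (simp add: q_def)
  also have "(fc ct ^^ (p * n)) 0 = ((fc ct ^^ p) ^^ n) 0" by (simp add: funpow_mult)
  also have "\<dots> = 0" using p(2) by (induction n) auto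
  finally have \<theta>0: "\<theta> 0 = 0" .
  have \<psi>orb: "\<psi> k w = orb (replicate (p * k) ct @ replicate q ct @ ell w) 0" for k w
    by (simp add: \<psi>_def \<theta>_def \<Phi>_def orb_append orb_replicate)
  have \<psi>B: "norm (\<psi> k w) \<le> B" if "w \<in> \<Omega>" for k w
  proof -
    have "set (replicate (p * k) ct @ replicate q ct @ ell w) \<subseteq> cball c r" using ellball[OF that] ctc by auto
    then show ?thesis using orbL B \<psi>orb by metis
  qed
  have \<psi>K: "\<psi> k lam0 \<in> K" for k unfolding \<psi>_def \<theta>_def using Kfun \<Phi>0K by blast
  define \<H> where "\<H> = {h. h holomorphic_on \<Omega> \<and> (\<forall>w\<in>\<Omega>. norm (h w) \<le> B)}"
  obtain h \<rho> where h: "h holomorphic_on \<Omega>" "strict_mono (\<rho> :: nat \<Rightarrow> nat)"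
      "\<And>x. x \<in> \<Omega> \<Longrightarrow> ((\<lambda>n. \<psi> (\<rho> n) x) \<longlongrightarrow> h x) sequentially"
  proof (rule Montel[of \<Omega> \<H> \<psi>])
    show "open \<Omega>" by (rule \<Omega>open)
    show "h holomorphic_on \<Omega>" if "h \<in> \<H>" for h using that by (simp add: \<H>_def)
    show "\<exists>B. \<forall>h\<in>\<H>. \<forall>z\<in>K. norm (h z) \<le> B" if "compact K" "K \<subseteq> \<Omega>" for K
      using that by (auto simp: \<H>_def)
    show "range \<psi> \<subseteq> \<H>" using \<psi>holo \<psi>B by (auto simp: \<H>_def intro: holomorphic_on_subset)
  qed auto
  obtain \<delta> where \<delta>: "\<delta> > 0" "\<And>w. norm w < \<delta> \<Longrightarrow> norm ((fc ct ^^ p) w) \<le> norm w / 2"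
    using contraction[OF p] by blast
  have "isCont \<theta> 0" using \<theta>holo
    by (metis continuous_on_eq_continuous_at holomorphic_on_imp_continuous_on open_UNIV UNIV_I)
  then have "\<forall>\<^sub>F w in at 0. \<theta> w \<in> ball 0 \<delta>"
    using topological_tendstoD[of \<theta> "\<theta> 0" "at 0" "ball 0 \<delta>"] \<theta>0 \<delta>(1) by (simp add: isCont_def)
  then obtain e1 where e1: "e1 > 0" "\<And>w. w \<noteq> 0 \<Longrightarrow> dist w 0 < e1 \<Longrightarrow> \<theta> w \<in> ball 0 \<delta>"
    by (auto simp: eventually_at)
  obtain e2 where e2: "e2 > 0" "ball 0 e2 \<subseteq> \<Omega>" using \<Omega>open \<open>0 \<in> \<Omega>\<close> openE by blast
  define V where "V = ball (0::complex) (min e1 e2)"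
  have hV: "h w = 0" if "w \<in> V" for w
  proof -
    have "norm (\<theta> w) < \<delta>"
      using e1 that \<theta>0 \<delta>(1) by (cases "w = 0") (auto simp: V_def dist_norm)
    then have "(\<lambda>k. ((fc ct ^^ p) ^^ k) (\<theta> w)) \<longlonglongrightarrow> 0" using iterate_zero[of \<delta> "fc ct ^^ p" "\<theta> w"] \<delta> by blast
    then have "(\<lambda>k. \<psi> k w) \<longlonglongrightarrow> 0" by (simp add: \<psi>_def funpow_mult)
    then have "(\<lambda>j. \<psi> (\<rho> j) w) \<longlonglongrightarrow> 0" using LIMSEQ_subseq_LIMSEQ[OF _ h(2)] by (auto simp: o_def)
    moreover have "w \<in> \<Omega>" using that e2 by (auto simp: V_def)
    ultimately show ?thesis using h(3) LIMSEQ_unique by blast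
  qed
  have "h lam0 = 0"
  proof (rule analytic_continuation[OF h(1) \<Omega>open \<Omega>conn _ \<open>0 \<in> \<Omega>\<close>])
    show "V \<subseteq> \<Omega>" using e2 by (auto simp: V_def)
    show "0 islimpt V" using e1 e2 by (simp add: V_def islimpt_ball)
    show "\<And>z. z \<in> V \<Longrightarrow> h z = 0" by (rule hV)
    show "lam0 \<in> \<Omega>" by (rule lam0\<Omega>)
  qed
  then have "(\<lambda>j. \<psi> (\<rho> j) lam0) \<longlonglongrightarrow> 0" using h(3)[OF lam0\<Omega>] by simp
  then show "0 \<in> K" by (rule closed_sequentially[OF compact_imp_closed[OF K(2)], rotated]) (rule \<psi>K)
qed

theorem lemma4p5:
  fixes c ct :: complex and r :: real
  assumes "r \<ge> 0"
    and "ct \<in> interior (cball c r)"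
    and "superattracting ct"
    and "bounded (closure {g 0 | g. g \<in> G c r})"
  shows "planar_minimal_set (G c r) (closure {g 0 | g. g \<in> G c r})"
proof -
  define S where "S = {g 0 | g. g \<in> G c r}"
  define L where "L = closure S"
  have ct: "ct \<in> ball c r" using assms(2) by simp
  have ctc: "ct \<in> cball c r" using ct by auto
  have "fc ct \<in> G c r" using ctc by (simp add: G_def gen_semigroup.base)
  then have "fc ct 0 \<in> L" unfolding L_def S_def by (intro closure_subset[THEN subsetD]) auto
  then have ne: "L \<noteq> {}" by auto
  have cpt: "compact L" using assms(4) unfolding L_def S_def by (simp add: compact_eq_bounded_closed)
  have inv: "forward_invariant (G c r) L" unfolding forward_invariant_def
  proof
    fix g assume g: "g \<in> G c r"
    have "g ` S \<subseteq> S"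
    proof
      fix y assume "y \<in> g ` S"
      then obtain h where h: "h \<in> G c r" "y = g (h 0)" unfolding S_def by auto
      then have "g \<circ> h \<in> G c r" using g unfolding G_def by (simp add: gen_semigroup.comp)
      moreover have "y = (g \<circ> h) 0" using h by simp
      ultimately show "y \<in> S" unfolding S_def by blast
    qed
    then have "g ` S \<subseteq> L" unfolding L_def using closure_subset by blast
    then show "g ` L \<subseteq> L" unfolding L_def
      by (intro image_closure_subset) (auto intro: continuous_on_subset[OF G_cont[OF g]])
  qed
  have mini: "K = L" if K: "K \<noteq> {}" "compact K" "forward_invariant (G c r) K" "K \<subseteq> L" for K
  proof
    show "K \<subseteq> L" by (rule K(4))
    have "0 \<in> K" using zero_in_K[OF ct assms(3) assms(4) K(1-3)] K(4) unfolding L_def S_def by blast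
    then have "S \<subseteq> K" using K(3) unfolding S_def forward_invariant_def by blast
    then show "L \<subseteq> K" unfolding L_def
      using closure_minimal compact_imp_closed[OF K(2)] by blast
  qed
  show ?thesis unfolding planar_minimal_set_def
    using ne cpt inv mini unfolding L_def S_def by blast
qed

end
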